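(* Assume Banderier's conjecture. Then for every $i\ge1$ such that $p_i\#-1$ is not a prime, the primorial $p_i\#$ belongs to the set $S$.
   Context: Let $p_1<p_2<\cdots$ be the primes and $p_i\#=p_1p_2\cdots p_i$ the $i$-th primorial. Banderier's conjecture: for every $i\ge2$, if $q$ is the largest prime smaller than $p_i\#$, then either $p_i\#-q=1$ or $p_i\#-q$ is a prime. Let $S$ be the set of integers $n\ge2$ such that, writing $p^a$ for the largest prime power dividing $n$, there is no prime $q$ with $n-p^a<q<n$. *)

theory Defs
  imports "HOL-Number_Theory.Number_Theory" "HOL-Library.Infinite_Set"
begin

text \<open>The i-th prime, 1-indexed: nth_prime 1 = 2, nth_prime 2 = 3, ...\<close>
definition nth_prime :: "nat \<Rightarrow> nat" where
  "nth_prime i = Infinite_Set.enumerate {p::nat. prime p} (i - 1)"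

definition primorial :: "nat \<Rightarrow> nat" where
  "primorial i = (\<Prod>j\<in>{1..i}. nth_prime j)"

definition prev_prime :: "nat \<Rightarrow> nat" where
  "prev_prime n = (GREATEST q. prime q \<and> q < n)"

definition banderier_conjecture :: bool where
  "banderier_conjecture \<longleftrightarrow>
     (\<forall>i\<ge>2. primorial i - prev_prime (primorial i) = 1
            \<or> prime (primorial i - prev_prime (primorial i)))"

definition max_primepow_dvd :: "nat \<Rightarrow> nat" where
  "max_primepow_dvd n = Max {m. m dvd n \<and> primepow m}"

definition setS :: "nat set" where
  "setS = {n. n \<ge> 2 \<and> \<not> (\<exists>q. prime q \<and> n - max_primepow_dvd n < q \<and> q < n)}"

end

theory Submission
  imports Defs
begin

lemma inf_primes: "infinite {p::nat. prime p}"
  using primes_infinite by simp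

lemma nth_prime_prime: "prime (nth_prime i)"
  unfolding nth_prime_def using enumerate_in_set[OF inf_primes] by simp

lemma nth_prime_mono_iff: "i \<ge> 1 \<Longrightarrow> j \<ge> 1 \<Longrightarrow> nth_prime i \<le> nth_prime j \<longleftrightarrow> i \<le> j"
  unfolding nth_prime_def using enumerate_mono_le_iff[OF inf_primes] by auto

lemma nth_prime_mono_lt: "i \<ge> 1 \<Longrightarrow> j \<ge> 1 \<Longrightarrow> nth_prime i < nth_prime j \<longleftrightarrow> i < j"
  unfolding nth_prime_def using enumerate_mono_iff[OF inf_primes] by auto

lemma nth_prime_surj: "prime (p::nat) \<Longrightarrow> \<exists>j\<ge>1. p = nth_prime j"
proof -
  assume "prime p"
  then obtain n where "p = enumerate {p::nat. prime p} n"
    using enumerate_Ex[OF inf_primes] by blast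
  then show ?thesis unfolding nth_prime_def by (intro exI[of _ "Suc n"]) auto
qed

lemma least_prime: "(LEAST n::nat. prime n) = 2"
  by (rule Least_equality) (auto simp: prime_ge_2_nat)
lemma nth_prime_1: "nth_prime 1 = 2"
  unfolding nth_prime_def using least_prime by (simp add: enumerate_0)
lemma nth_prime_2: "nth_prime 2 = 3"
proof -
  have "nth_prime 2 = enumerate ({p::nat. prime p} - {2}) 0"
    unfolding nth_prime_def using least_prime by (simp add: numeral_2_eq_2 enumerate_Suc)
  also have "\<dots> = 3"
  proof -
    have "(LEAST n::nat. n \<in> {p. prime p} - {2}) = 3"
    proof (rule Least_equality)
      show "3 \<in> {p::nat. prime p} - {2}" by simp
    next
      fix y :: nat assume "y \<in> {p. prime p} - {2}"
      then have "prime y" "y \<noteq> 2" by auto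
      then show "3 \<le> y" using prime_ge_2_nat[of y] by linarith
    qed
    then show ?thesis by (simp add: enumerate_0)
  qed
  finally show ?thesis .
qed

lemma primorial_Suc: "primorial (Suc i) = primorial i * nth_prime (Suc i)"
  unfolding primorial_def by (simp add: prod.nat_ivl_Suc' mult.commute)

lemma primorial_pos: "primorial i > 0"
  unfolding primorial_def using nth_prime_prime
  by (simp add: prime_gt_0_nat)

lemma nth_prime_dvd: "1 \<le> j \<Longrightarrow> j \<le> i \<Longrightarrow> nth_prime j dvd primorial i"
  unfolding primorial_def by (rule dvd_prodI) auto

lemma prime_dvd_primorial: "prime (p::nat) \<Longrightarrow> p dvd primorial i \<Longrightarrow> \<exists>j\<in>{1..i}. p = nth_prime j"
proof -
  assume p: "prime p" and d: "p dvd primorial i"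
  then obtain j where j: "j \<in> {1..i}" "p dvd nth_prime j"
    unfolding primorial_def using prime_dvd_prod_iff[of "{1..i}" p nth_prime] by auto
  then have "p = nth_prime j" using p nth_prime_prime primes_dvd_imp_eq by blast
  with j show ?thesis by blast
qed

lemma sqfree_primorial: "prime (p::nat) \<Longrightarrow> \<not> p^2 dvd primorial i"
proof (induction i)
  case 0
  then show ?case using prime_gt_1_nat[of p] by (simp add: primorial_def power2_eq_square)
next
  case (Suc i)
  let ?q = "nth_prime (Suc i)"
  show ?case
  proof
    assume h: "p^2 dvd primorial (Suc i)"
    show False
    proof (cases "p = ?q")
      case True
      then have "p * p dvd primorial i * p" using h by (simp add: primorial_Suc power2_eq_square)
      then have "p dvd primorial i" using Suc.prems by (simp add: prime_gt_0_nat)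
      then obtain j where j: "j \<in> {1..i}" "p = nth_prime j" using prime_dvd_primorial Suc.prems by blast
      then have "nth_prime j < ?q" using nth_prime_mono_lt by auto
      with True j show False by simp
    next
      case False
      have "coprime (p^2) ?q"
        using False Suc.prems nth_prime_prime primes_coprime by auto
      then have "p^2 dvd primorial i" using h primorial_Suc
        by (metis coprime_dvd_mult_left_iff)
      with Suc show False by simp
    qed
  qed
qed

lemma primepow_le: "i \<ge> 1 \<Longrightarrow> primepow m \<Longrightarrow> m dvd primorial i \<Longrightarrow> m \<le> nth_prime i"
proof -
  assume i: "i \<ge> 1" and pp: "primepow m" and d: "m dvd primorial i"
  then obtain p k where pk: "prime p" "k > 0" "m = p ^ k" unfolding primepow_def by auto
  have "k = 1"
  proof (rule ccontr)
    assume "k \<noteq> 1"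
    then have "p^2 dvd m" using pk by (simp add: le_imp_power_dvd)
    then show False using d sqfree_primorial pk dvd_trans by blast
  qed
  then have "p dvd primorial i" using d pk by simp
  then obtain j where "j \<in> {1..i}" "p = nth_prime j" using prime_dvd_primorial pk by blast
  then show ?thesis using nth_prime_mono_iff i pk \<open>k = 1\<close> by auto
qed

lemma max_pp_le: "i \<ge> 1 \<Longrightarrow> max_primepow_dvd (primorial i) \<le> nth_prime i"
proof -
  assume i: "i \<ge> 1"
  let ?A = "{m. m dvd primorial i \<and> primepow m}"
  have fin: "finite ?A"
    by (rule finite_subset[of _ "{..primorial i}"]) (auto intro: dvd_imp_le primorial_pos)
  have ne: "nth_prime i \<in> ?A"
    using i nth_prime_dvd nth_prime_prime primepow_prime by auto
  show ?thesis unfolding max_primepow_dvd_def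
    using fin ne primepow_le i by (subst Max_le_iff) auto
qed

lemma prev_prime_props:
  assumes "n \<ge> 3"
  shows "prime (prev_prime n)" "prev_prime n < n" "\<And>q. prime q \<Longrightarrow> q < n \<Longrightarrow> q \<le> prev_prime n"
proof -
  have ex: "prime (2::nat) \<and> (2::nat) < n" using assms by simp
  have bd: "\<And>y. prime y \<and> y < n \<Longrightarrow> y \<le> n" by auto
  have G: "prime (prev_prime n) \<and> prev_prime n < n"
    unfolding prev_prime_def by (rule GreatestI_nat[of "\<lambda>q. prime q \<and> q < n", OF ex bd])
  then show "prime (prev_prime n)" "prev_prime n < n" by auto
  show "\<And>q. prime q \<Longrightarrow> q < n \<Longrightarrow> q \<le> prev_prime n"
  proof -
    fix q :: nat assume "prime q" "q < n"
    then show "q \<le> prev_prime n"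
      unfolding prev_prime_def using Greatest_le_nat[of "\<lambda>q. prime q \<and> q < n" q n] bd by blast
  qed
qed

theorem mainTheorem7:
  assumes "banderier_conjecture"
  shows "\<forall>i\<ge>1. \<not> prime (primorial i - 1) \<longrightarrow> primorial i \<in> setS"
proof (intro allI impI)
  fix i :: nat
  assume i: "i \<ge> 1" and np: "\<not> prime (primorial i - 1)"
  define P where "P = primorial i"
  define M where "M = max_primepow_dvd P"
  have MP: "M \<le> nth_prime i" unfolding M_def P_def using max_pp_le i by simp
  have "2 dvd P" unfolding P_def using nth_prime_dvd[of 1 i] i nth_prime_1 by simp
  then have P2: "P \<ge> 2" using primorial_pos[of i] P_def by (simp add: dvd_imp_le)
  show "primorial i \<in> setS"
  proof (cases "i = 1")
    case True
    then have "P = 2" unfolding P_def primorial_def using nth_prime_1 by simp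
    then show ?thesis unfolding setS_def P_def by (auto dest: prime_ge_2_nat)
  next
    case False
    then have i2: "i \<ge> 2" using i by simp
    have "3 dvd P" unfolding P_def using nth_prime_dvd[of 2 i] i2 nth_prime_2 by simp
    moreover have "P \<noteq> 3" using \<open>2 dvd P\<close> by auto
    moreover have "P \<noteq> 2" using \<open>3 dvd P\<close> by auto
    ultimately have P4: "P \<ge> 4" using P2 by linarith
    define q where "q = prev_prime P"
    have q: "prime q" "q < P" "\<And>q'. prime q' \<Longrightarrow> q' < P \<Longrightarrow> q' \<le> q"
      using prev_prime_props[of P] P4 unfolding q_def by auto
    define r where "r = P - q"
    have "r = 1 \<or> prime r"
      using assms i2 unfolding banderier_conjecture_def r_def q_def P_def by blast
    moreover have "r \<noteq> 1"
    proof
      assume "r = 1"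
      then have "q = P - 1" using q(2) r_def by simp
      then show False using np q(1) P_def by simp
    qed
    ultimately have r: "prime r" by simp
    have rgt: "r > nth_prime i"
    proof (rule ccontr)
      assume "\<not> r > nth_prime i"
      then have "r \<le> nth_prime i" by simp
      obtain j where j: "j \<ge> 1" "r = nth_prime j" using nth_prime_surj r by blast
      then have "j \<le> i" using \<open>r \<le> nth_prime i\<close> nth_prime_mono_iff i by auto
      then have "r dvd P" using nth_prime_dvd j P_def by simp
      moreover have "P = q + r" using q(2) r_def by simp
      ultimately have "r dvd q" by (simp add: dvd_add_left_iff)
      then have "r = q" using r q(1) primes_dvd_imp_eq by blast
      then have P2q: "P = 2 * q" using \<open>P = q + r\<close> by simp
      have "3 dvd 2 * q" using \<open>3 dvd P\<close> P2q by simp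
      then have "3 dvd q" using prime_dvd_mult_iff[of "3::nat" 2 q] by auto
      then have "q = 3" using q(1) primes_dvd_imp_eq[of "3::nat" q] by auto
      then have "P - 1 = 5" using P2q by simp
      then show False using np P_def by simp
    qed
    have "\<not> (\<exists>q'. prime q' \<and> P - M < q' \<and> q' < P)"
    proof
      assume "\<exists>q'. prime q' \<and> P - M < q' \<and> q' < P"
      then obtain q' where h: "prime q'" "P - M < q'" "q' < P" by blast
      then have "q' \<le> q" using q(3) by simp
      moreover have "q = P - r" using q(2) r_def by simp
      ultimately show False using rgt MP h by linarith
    qed
    then show ?thesis unfolding setS_def using P2 P_def M_def by simp
  qed
qed

end
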